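(* Let $A\in\mathbb{R}^{m\times n}$ have no zero row, with rows $a_1^T,\dots,a_m^T$, and let ${\bf u}=(\mu_1,\dots,\mu_m)\in\mathbb{R}^m$. Let $P_k(\mu_k)=I-\mu_k a_ka_k^T/\|a_k\|_2^2$, $Q_j({\bf u}_j)=P_m(\mu_m)\cdots P_{j+1}(\mu_{j+1})$ for $1\le j\le m-1$, $Q_m({\bf u}_m)=I$, and $$A_{\mathcal S}({\bf u})=\big(Q_1({\bf u}_1)a_1,\dots,Q_m({\bf u}_m)a_m\big)^T\in\mathbb{R}^{m\times n}.$$ Then there exists a unit upper triangular matrix $C({\bf u})\in\mathbb{R}^{m\times m}$ such that $A_{\mathcal S}({\bf u})=C({\bf u})A$.
   Context: ${\bf u}_j=(\mu_{j+1},\dots,\mu_m)$. A unit upper triangular matrix is an upper triangular matrix with all diagonal entries equal to $1$. *)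

theory Defs
  imports "Jordan_Normal_Form.Matrix"
begin

text \<open>Rows and indices are 0-based: row k of A (k < m) is a_(k+1) of the paper.\<close>

definition proj_P :: "real mat \<Rightarrow> real vec \<Rightarrow> nat \<Rightarrow> real mat" where
  "proj_P A u k = 1\<^sub>m (dim_col A) -
     (u $ k / (row A k \<bullet> row A k)) \<cdot>\<^sub>m
       mat (dim_col A) (dim_col A) (\<lambda>(i, j). row A k $ i * row A k $ j)"

text \<open>Q A u j = P_(m-1) * ... * P_(j+1) (0-based), identity when j = m-1.\<close>
definition prod_Q :: "real mat \<Rightarrow> real vec \<Rightarrow> nat \<Rightarrow> real mat" where
  "prod_Q A u j = foldl (\<lambda>M k. proj_P A u k * M) (1\<^sub>m (dim_col A)) [Suc j..<dim_row A]"

definition A_S :: "real mat \<Rightarrow> real vec \<Rightarrow> real mat" where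
  "A_S A u = mat (dim_row A) (dim_col A) (\<lambda>(i, l). (prod_Q A u i *\<^sub>v row A i) $ l)"

definition unit_upper_triangular :: "real mat \<Rightarrow> bool" where
  "unit_upper_triangular C \<longleftrightarrow> upper_triangular C \<and> (\<forall>i < dim_row C. C $$ (i, i) = 1)"

end

theory Submission
  imports Defs
begin

lemma P_apply:
  assumes A: "A \<in> carrier_mat m n" and b: "b < m" and y: "y \<in> carrier_vec n" and l: "l < n"
  shows "(proj_P A u b *\<^sub>v y) $ l = y $ l -
     (u $ b / (row A b \<bullet> row A b) * (row A b \<bullet> y)) * A $$ (b, l)"
proof -
  let ?r = "row A b" let ?s = "u $ b / (?r \<bullet> ?r)"
  have dc: "dim_col A = n" using A by auto
  have "(proj_P A u b *\<^sub>v y) $ l = (\<Sum>j<n. ((if l = j then 1 else 0) - ?s * (?r $ l * ?r $ j)) * y $ j)"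
    using l y dc unfolding proj_P_def
    by (simp add: scalar_prod_def lessThan_atLeast0 row_def)
  also have "\<dots> = (\<Sum>j<n. (if l = j then 1 else 0) * y $ j) - ?s * ?r $ l * (\<Sum>j<n. ?r $ j * y $ j)"
    by (simp add: left_diff_distrib sum_subtractf sum_distrib_left mult.assoc)
  also have "(\<Sum>j<n. (if l = j then 1 else 0) * y $ j) = y $ l"
  proof -
    have "(\<Sum>j<n. (if l = j then 1 else 0) * y $ j) = (\<Sum>j<n. if l = j then y $ j else 0)"
      by (rule sum.cong) auto
    also have "\<dots> = y $ l" using l by (simp add: sum.delta')
    finally show ?thesis .
  qed
  also have "(\<Sum>j<n. ?r $ j * y $ j) = ?r \<bullet> y" using y
    by (simp add: scalar_prod_def lessThan_atLeast0)
  also have "?r $ l = A $$ (b, l)" using A b l by auto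
  finally show ?thesis by simp
qed

lemma P_carrier: "A \<in> carrier_mat m n \<Longrightarrow> proj_P A u b \<in> carrier_mat n n"
  unfolding proj_P_def by auto

lemma G_main:
  assumes A: "A \<in> carrier_mat m n" and bm: "b \<le> m" and ab: "a \<le> b"
  shows "foldl (\<lambda>M k. proj_P A u k * M) (1\<^sub>m n) [a..<b] \<in> carrier_mat n n \<and>
    (\<forall>x \<in> carrier_vec n. \<exists>c. \<forall>l<n.
      (foldl (\<lambda>M k. proj_P A u k * M) (1\<^sub>m n) [a..<b] *\<^sub>v x) $ l
        = x $ l + (\<Sum>k\<in>{a..<b}. c k * A $$ (k, l)))"
  using bm ab
proof (induction b)
  case 0
  then show ?case by auto
next
  case (Suc b)
  show ?case
  proof (cases "a = Suc b")
    case True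
    then show ?thesis by auto
  next
    case False
    hence ab: "a \<le> b" and bm: "b < m" using Suc by auto
    let ?G = "foldl (\<lambda>M k. proj_P A u k * M) (1\<^sub>m n) [a..<b]"
    have IH: "?G \<in> carrier_mat n n" "\<forall>x \<in> carrier_vec n. \<exists>c. \<forall>l<n.
      (?G *\<^sub>v x) $ l = x $ l + (\<Sum>k\<in>{a..<b}. c k * A $$ (k, l))"
      using Suc ab bm by auto
    have eq: "foldl (\<lambda>M k. proj_P A u k * M) (1\<^sub>m n) [a..<Suc b] = proj_P A u b * ?G"
      using ab by simp
    have car: "proj_P A u b * ?G \<in> carrier_mat n n" using IH(1) P_carrier[OF A] by (metis mult_carrier_mat)
    have "\<exists>c. \<forall>l<n. ((proj_P A u b * ?G) *\<^sub>v x) $ l = x $ l + (\<Sum>k\<in>{a..<Suc b}. c k * A $$ (k, l))"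
      if x: "x \<in> carrier_vec n" for x
    proof -
      obtain c where c: "\<forall>l<n. (?G *\<^sub>v x) $ l = x $ l + (\<Sum>k\<in>{a..<b}. c k * A $$ (k, l))"
        using IH(2) x by blast
      define y where "y = ?G *\<^sub>v x"
      have y: "y \<in> carrier_vec n" unfolding y_def using IH(1) x by (rule mult_mat_vec_carrier)
      define t where "t = u $ b / (row A b \<bullet> row A b) * (row A b \<bullet> y)"
      have "((proj_P A u b * ?G) *\<^sub>v x) $ l = x $ l + (\<Sum>k\<in>{a..<Suc b}. (c(b := - t)) k * A $$ (k, l))"
        if l: "l < n" for l
      proof -
        have "(proj_P A u b * ?G) *\<^sub>v x = proj_P A u b *\<^sub>v y"
          using IH(1) P_carrier[OF A] x y_def by (metis assoc_mult_mat_vec)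
        hence "((proj_P A u b * ?G) *\<^sub>v x) $ l = y $ l - t * A $$ (b, l)"
          using P_apply[OF A bm y l] t_def by simp
        also have "\<dots> = x $ l + (\<Sum>k\<in>{a..<b}. c k * A $$ (k, l)) - t * A $$ (b, l)"
          using c l y_def by simp
        also have "(\<Sum>k\<in>{a..<b}. c k * A $$ (k, l)) = (\<Sum>k\<in>{a..<b}. (c(b := - t)) k * A $$ (k, l))"
          by (rule sum.cong) auto
        finally show ?thesis using ab by simp
      qed
      thus ?thesis by blast
    qed
    thus ?thesis using eq car by simp
  qed
qed

theorem theorem3p5:
  fixes A :: "real mat" and u :: "real vec" and m n :: nat
  assumes "A \<in> carrier_mat m n"
    and "\<forall>k < m. row A k \<noteq> 0\<^sub>v n"
    and "dim_vec u = m"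
  shows "\<exists>C \<in> carrier_mat m m. unit_upper_triangular C \<and> A_S A u = C * A"
proof -
  have A: "A \<in> carrier_mat m n" using assms(1) .
  have "\<forall>i. \<exists>c. i < m \<longrightarrow> (\<forall>l<n. (prod_Q A u i *\<^sub>v row A i) $ l
        = row A i $ l + (\<Sum>k\<in>{Suc i..<m}. c k * A $$ (k, l)))"
  proof (intro allI)
    fix i
    show "\<exists>c. i < m \<longrightarrow> (\<forall>l<n. (prod_Q A u i *\<^sub>v row A i) $ l
        = row A i $ l + (\<Sum>k\<in>{Suc i..<m}. c k * A $$ (k, l)))"
    proof (cases "i < m")
      case True
      have "row A i \<in> carrier_vec n" using A by auto
      moreover have "dim_col A = n" "dim_row A = m" using A by auto
      moreover have "Suc i \<le> m" using True by simp
      ultimately obtain c where "\<forall>l<n. (prod_Q A u i *\<^sub>v row A i) $ l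
        = row A i $ l + (\<Sum>k\<in>{Suc i..<m}. c k * A $$ (k, l))"
        using G_main[OF A, of m "Suc i" u] unfolding prod_Q_def by blast
      then show ?thesis by blast
    qed auto
  qed
  then obtain c where c: "\<And>i l. i < m \<Longrightarrow> l < n \<Longrightarrow> (prod_Q A u i *\<^sub>v row A i) $ l
        = row A i $ l + (\<Sum>k\<in>{Suc i..<m}. c i k * A $$ (k, l))"
    by metis
  define C where "C = mat m m (\<lambda>(i, k). if k = i then 1 else if i < k then c i k else 0)"
  have Cc: "C \<in> carrier_mat m m" unfolding C_def by auto
  have ut: "unit_upper_triangular C"
    unfolding unit_upper_triangular_def upper_triangular_def C_def by auto
  have "A_S A u = C * A"
  proof (rule eq_matI)
    fix i l assume i: "i < dim_row (C * A)" and l: "l < dim_col (C * A)"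
    hence i: "i < m" and l: "l < n" using A Cc by auto
    have "(C * A) $$ (i, l) = (\<Sum>k\<in>{0..<m}. C $$ (i, k) * A $$ (k, l))"
      using A Cc i l by (simp add: scalar_prod_def)
    also have "\<dots> = (\<Sum>k\<in>{0..<m}. (if k = i then A $$ (k, l) else 0) +
        (if k \<in> {Suc i..<m} then c i k * A $$ (k, l) else 0))"
      by (rule sum.cong) (auto simp: C_def i)
    also have "\<dots> = A $$ (i, l) + (\<Sum>k\<in>{Suc i..<m}. c i k * A $$ (k, l))"
      proof -
      have e: "{0..<m} \<inter> Collect ((\<le>) (Suc i)) = {Suc i..<m}" by auto
      show ?thesis using i by (simp add: sum.distrib sum.If_cases Int_absorb1 e)
    qed
    also have "\<dots> = A_S A u $$ (i, l)"
      using c[OF i l] A i l by (simp add: A_S_def)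
    finally show "A_S A u $$ (i, l) = (C * A) $$ (i, l)" by simp
  qed (use A Cc in \<open>auto simp: A_S_def\<close>)
  thus ?thesis using Cc ut by blast
qed

end
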